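(* Let $E\subset\mathbb{R}^2$ be an arbitrary set. Call a function $v:E\to\mathbb{R}$ a semistatic strategy if there exist functions $h,g:\mathbb{R}\to\mathbb{R}$ such that $v(x,y)=h(x)(y-x)+g(y)$ for all $(x,y)\in E$. Then the set of semistatic strategies on $E$ is closed under pointwise convergence: if $v_n:E\to\mathbb{R}$, $n\in\mathbb{N}$, are semistatic strategies and $v_n(x,y)\to v(x,y)$ for every $(x,y)\in E$, then $v:E\to\mathbb{R}$ is a semistatic strategy.
   Context: Interpretation: $x$ is the price of a stock at date 1 and $y$ its price at date 2; $h$ is the stock position and $g$ the option position. *)

theory Defs
  imports Complex_Main
begin

text \<open>Values of v outside E are irrelevant.\<close>
definition semistatic :: "(real \<times> real) set \<Rightarrow> (real \<times> real \<Rightarrow> real) \<Rightarrow> bool" where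
  "semistatic E v \<longleftrightarrow>
     (\<exists>h g :: real \<Rightarrow> real. \<forall>x y. (x, y) \<in> E \<longrightarrow> v (x, y) = h x * (y - x) + g y)"

end

theory Submission
  imports Defs "HOL-Library.Function_Algebras"
begin

definition sc :: "real \<Rightarrow> (real + real \<Rightarrow> real) \<Rightarrow> (real + real \<Rightarrow> real)" where
  "sc c f = (\<lambda>i. c * f i)"

interpretation FV: vector_space_pair sc "(*) :: real \<Rightarrow> real \<Rightarrow> real"
  by unfold_locales (auto simp: sc_def algebra_simps fun_eq_iff)

definition row :: "real \<times> real \<Rightarrow> (real + real \<Rightarrow> real)" where
  "row p = (\<lambda>u. (if u = Inl (fst p) then snd p - fst p else 0) + (if u = Inr (snd p) then 1 else 0))"

lemma row_inj: assumes "row p = row q" shows "p = q"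
proof -
  have A: "\<And>u. row p u = row q u" using assms by simp
  have s: "snd p = snd q"
    using A[of "Inr (snd p)"] by (auto simp: row_def split: if_splits)
  have f1: "fst p = fst q" if "fst p \<noteq> snd p"
    using A[of "Inl (fst p)"] that by (auto simp: row_def split: if_splits)
  have f2: "fst p = fst q" if "fst q \<noteq> snd q"
    using A[of "Inl (fst q)"] that by (auto simp: row_def split: if_splits)
  show ?thesis using s f1 f2 by (metis prod_eq_iff)
qed

lemma sum_fun_apply: "finite T \<Longrightarrow> (\<Sum>b\<in>T. f b) s = (\<Sum>b\<in>T. f b s)"
  for f :: "'b \<Rightarrow> 'c \<Rightarrow> real"
  by (induction T rule: finite_induct) auto

lemma row_eval:
  fixes w :: "real + real \<Rightarrow> real"
  assumes "finite S" "Inl (fst p) \<in> S" "Inr (snd p) \<in> S"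
  shows "(\<Sum>s\<in>S. row p s * w s) = w (Inl (fst p)) * (snd p - fst p) + w (Inr (snd p))"
proof -
  have "(\<Sum>s\<in>S. row p s * w s) =
     (\<Sum>s\<in>S. (if s = Inl (fst p) then (snd p - fst p) * w s else 0)) +
     (\<Sum>s\<in>S. (if s = Inr (snd p) then w s else 0))"
    unfolding sum.distrib[symmetric] by (rule sum.cong) (auto simp: row_def algebra_simps)
  also have "\<dots> = w (Inl (fst p)) * (snd p - fst p) + w (Inr (snd p))"
    using assms by (simp add: sum.delta)
  finally show ?thesis .
qed

lemma key:
  fixes E :: "(real \<times> real) set"
    and vs :: "nat \<Rightarrow> real \<times> real \<Rightarrow> real"
    and v :: "real \<times> real \<Rightarrow> real"
  assumes ss: "\<And>n. semistatic E (vs n)"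
    and lim: "\<And>p. p \<in> E \<Longrightarrow> (\<lambda>n. vs n p) \<longlonglongrightarrow> v p"
    and T: "finite T" "\<And>b. b \<in> T \<Longrightarrow> pk b \<in> E \<and> row (pk b) = b"
    and z: "(\<Sum>b\<in>T. sc (c b) b) = 0"
  shows "(\<Sum>b\<in>T. c b * v (pk b)) = 0"
proof -
  have zero: "(\<Sum>b\<in>T. c b * vs n (pk b)) = 0" for n
  proof -
    obtain h g where hg: "\<And>x y. (x, y) \<in> E \<Longrightarrow> vs n (x, y) = h x * (y - x) + g y"
      using ss[of n] unfolding semistatic_def by blast
    define w where "w = (\<lambda>u. case u of Inl x \<Rightarrow> h x | Inr y \<Rightarrow> g y)"
    define S where "S = Inl ` fst ` pk ` T \<union> Inr ` snd ` pk ` T"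
    have fS: "finite S" using T(1) by (simp add: S_def)
    have e: "vs n (pk b) = (\<Sum>s\<in>S. b s * w s)" if "b \<in> T" for b
    proof -
      have "(\<Sum>s\<in>S. b s * w s) = (\<Sum>s\<in>S. row (pk b) s * w s)" using T(2)[OF that] by simp
      also have "\<dots> = h (fst (pk b)) * (snd (pk b) - fst (pk b)) + g (snd (pk b))"
        by (subst row_eval) (use fS that in \<open>auto simp: S_def w_def\<close>)
      also have "\<dots> = vs n (pk b)" using hg[of "fst (pk b)" "snd (pk b)"] T(2)[OF that] by simp
      finally show ?thesis by simp
    qed
    have "(\<Sum>b\<in>T. c b * vs n (pk b)) = (\<Sum>b\<in>T. \<Sum>s\<in>S. c b * (b s * w s))"
      by (simp add: e sum_distrib_left)
    also have "\<dots> = (\<Sum>s\<in>S. \<Sum>b\<in>T. c b * (b s * w s))"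
      by (rule sum.swap)
    also have "\<dots> = (\<Sum>s\<in>S. w s * (\<Sum>b\<in>T. c b * b s))"
      unfolding sum_distrib_left by (rule sum.cong[OF refl], rule sum.cong[OF refl]) (simp only: mult_ac)
    also have "\<dots> = (\<Sum>s\<in>S. w s * (\<Sum>b\<in>T. sc (c b) b) s)"
      unfolding sum_fun_apply[OF T(1)] sc_def by (rule refl)
    also have "\<dots> = 0" by (simp add: z)
    finally show ?thesis .
  qed
  have "(\<lambda>n. \<Sum>b\<in>T. c b * vs n (pk b)) \<longlonglongrightarrow> (\<Sum>b\<in>T. c b * v (pk b))"
    by (intro tendsto_sum tendsto_mult_left lim) (use T(2) in auto)
  then have "(\<lambda>n. 0::real) \<longlonglongrightarrow> (\<Sum>b\<in>T. c b * v (pk b))" by (simp add: zero)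
  then show ?thesis using LIMSEQ_unique tendsto_const by metis
qed

theorem theorem2p2:
  fixes E :: "(real \<times> real) set"
    and vs :: "nat \<Rightarrow> real \<times> real \<Rightarrow> real"
    and v :: "real \<times> real \<Rightarrow> real"
  assumes "\<And>n. semistatic E (vs n)"
    and "\<And>p. p \<in> E \<Longrightarrow> (\<lambda>n. vs n p) \<longlonglongrightarrow> v p"
  shows "semistatic E v"
proof -
  define pk where "pk b = (SOME p. p \<in> E \<and> row p = b)" for b
  have pk: "pk b \<in> E \<and> row (pk b) = b" if "b \<in> row ` E" for b
    unfolding pk_def by (rule someI_ex) (use that in auto)
  have pkrow: "pk (row p) = p" if "p \<in> E" for p
    using pk[of "row p"] that row_inj by auto
  obtain B where B: "B \<subseteq> row ` E" "FV.vs1.independent B" "row ` E \<subseteq> FV.vs1.span B"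
    using FV.vs1.maximal_independent_subset by blast
  obtain G where G: "Vector_Spaces.linear sc (*) G" "\<And>b. b \<in> B \<Longrightarrow> G b = v (pk b)"
    using FV.linear_independent_extend[OF B(2), of "\<lambda>b. v (pk b)"] by blast
  have Gadd: "G (x + y) = G x + G y" and Gsc: "G (sc a x) = a * G x" for x y a
    using G(1) unfolding Vector_Spaces.linear_def module_hom_def module_hom_axioms_def by auto
  have Gsum: "G (\<Sum>a\<in>t. sc (r a) a) = (\<Sum>a\<in>t. r a * G a)" if "finite t" for t r
    using that
  proof (induction t rule: finite_induct)
    case empty
    have "G 0 = G 0 + G 0" using Gadd[of 0 0] by simp
    then show ?case by (simp add: zero_fun_def)
  next
    case (insert a t) then show ?case by (simp only: sum.insert[OF insert.hyps] Gadd Gsc insert.IH)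
  qed
  have Grow: "G (row p) = v p" if p: "p \<in> E" for p
  proof (cases "row p \<in> B")
    case True then show ?thesis using G(2) pkrow p by auto
  next
    case False
    have "row p \<in> FV.vs1.span B" using B(3) p by auto
    then obtain t r where t: "finite t" "t \<subseteq> B" "row p = (\<Sum>a\<in>t. sc (r a) a)"
      unfolding FV.vs1.span_explicit by blast
    have nt: "row p \<notin> t" using False t(2) by auto
    define c where "c = r(row p := -1)"
    have sumeq: "(\<Sum>a\<in>t. sc (c a) a) = (\<Sum>a\<in>t. sc (r a) a)"
      by (rule sum.cong) (use nt in \<open>auto simp: c_def\<close>)
    have sumeq2: "(\<Sum>a\<in>t. c a * v (pk a)) = (\<Sum>a\<in>t. r a * v (pk a))"
      by (rule sum.cong) (use nt in \<open>auto simp: c_def\<close>)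
    have "(\<Sum>b\<in>insert (row p) t. sc (c b) b) = sc (-1) (row p) + row p"
      using t nt sumeq by (simp add: c_def)
    also have "\<dots> = 0" by (simp add: sc_def fun_eq_iff)
    finally have z: "(\<Sum>b\<in>insert (row p) t. sc (c b) b) = 0" .
    have "(\<Sum>b\<in>insert (row p) t. c b * v (pk b)) = 0"
      by (rule key[OF assms t(1)[THEN finite.insertI] _ z]) (use pk B(1) t(2) p in \<open>auto intro!: pk\<close>)
    then have "v (pk (row p)) = (\<Sum>a\<in>t. r a * v (pk a))"
      using t(1) nt sumeq2 by (simp add: c_def)
    moreover have "G (row p) = (\<Sum>a\<in>t. r a * v (pk a))"
      using t G(2) by (simp add: Gsum subset_iff)
    ultimately show ?thesis using pkrow p by simp
  qed
  define hh where "hh x = G (\<lambda>u. if u = Inl x then 1 else 0)" for x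
  define gg where "gg y = G (\<lambda>u. if u = Inr y then 1 else 0)" for y
  have "v (x, y) = hh x * (y - x) + gg y" if "(x, y) \<in> E" for x y
  proof -
    have "row (x, y) = sc (y - x) (\<lambda>u. if u = Inl x then 1 else 0) + (\<lambda>u. if u = Inr y then 1 else 0)"
      by (auto simp: row_def sc_def fun_eq_iff)
    then have "G (row (x, y)) = hh x * (y - x) + gg y"
      by (simp add: Gadd Gsc hh_def gg_def)
    then show ?thesis using Grow[OF that] by simp
  qed
  then show ?thesis unfolding semistatic_def by blast
qed

end
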